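(* $\operatorname{BSR}(5,4)\ge 11$. In particular, the biquadratic form \[P(\mathbf{x},\mathbf{y})=x_1^2y_1^2+x_1^2y_2^2+x_1^2y_3^2+x_2^2y_1^2+x_2^2y_4^2+x_3^2y_2^2+x_3^2y_4^2+x_4^2y_3^2+x_4^2y_4^2+x_5^2y_1^2+(x_2y_3+x_5y_4)^2\] on $\mathbb{R}^5\times\mathbb{R}^4$ has SOS rank $11$ (i.e., it cannot be written as a sum of fewer than 11 squares of bilinear forms).
   Context: An $m\times n$ biquadratic form is a polynomial $P(\mathbf{x},\mathbf{y})=\sum_{i,k=1}^m\sum_{j,l=1}^n a_{ijkl}x_ix_ky_jy_l$ with real coefficients, $\mathbf{x}\in\mathbb{R}^m$, $\mathbf{y}\in\mathbb{R}^n$. It is SOS if $P=\sum_{p=1}^r f_p^2$ for some real bilinear forms $f_p(\mathbf{x},\mathbf{y})=\sum_{i,j}c^{(p)}_{ij}x_iy_j$; the least such $r$ is the SOS rank $\operatorname{sos}(P)$. $\operatorname{BSR}(m,n)$ is the maximum of $\operatorname{sos}(P)$ over all $m\times n$ SOS biquadratic forms $P$. *)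

theory Defs
  imports Complex_Main "HOL-Library.Extended_Nat"
begin

text \<open>Vectors in R^m are modelled as functions nat => real, of which only the
coordinates 0..m-1 are used (0-based indexing: x_1 is x 0).\<close>

definition bilinear_form :: "nat \<Rightarrow> nat \<Rightarrow> (nat \<Rightarrow> nat \<Rightarrow> real)
    \<Rightarrow> (nat \<Rightarrow> real) \<Rightarrow> (nat \<Rightarrow> real) \<Rightarrow> real" where
  "bilinear_form m n c = (\<lambda>x y. \<Sum>i<m. \<Sum>j<n. c i j * x i * y j)"

definition is_biquadratic :: "nat \<Rightarrow> nat \<Rightarrow> ((nat \<Rightarrow> real) \<Rightarrow> (nat \<Rightarrow> real) \<Rightarrow> real) \<Rightarrow> bool" where
  "is_biquadratic m n P \<longleftrightarrow> (\<exists>a :: nat \<Rightarrow> nat \<Rightarrow> nat \<Rightarrow> nat \<Rightarrow> real.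
     P = (\<lambda>x y. \<Sum>i<m. \<Sum>k<m. \<Sum>j<n. \<Sum>l<n. a i j k l * x i * x k * y j * y l))"

definition sos_with :: "nat \<Rightarrow> nat \<Rightarrow> ((nat \<Rightarrow> real) \<Rightarrow> (nat \<Rightarrow> real) \<Rightarrow> real) \<Rightarrow> nat \<Rightarrow> bool" where
  "sos_with m n P r \<longleftrightarrow> (\<exists>c :: nat \<Rightarrow> nat \<Rightarrow> nat \<Rightarrow> real.
     \<forall>x y. P x y = (\<Sum>p<r. (bilinear_form m n (c p) x y)\<^sup>2))"

definition is_sos :: "nat \<Rightarrow> nat \<Rightarrow> ((nat \<Rightarrow> real) \<Rightarrow> (nat \<Rightarrow> real) \<Rightarrow> real) \<Rightarrow> bool" where
  "is_sos m n P \<longleftrightarrow> (\<exists>r. sos_with m n P r)"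

definition sos_rank :: "nat \<Rightarrow> nat \<Rightarrow> ((nat \<Rightarrow> real) \<Rightarrow> (nat \<Rightarrow> real) \<Rightarrow> real) \<Rightarrow> nat" where
  "sos_rank m n P = (LEAST r. sos_with m n P r)"

text \<open>BSR(m,n), as a supremum in the extended naturals (so it is well defined a priori).\<close>
definition BSR :: "nat \<Rightarrow> nat \<Rightarrow> enat" where
  "BSR m n = (SUP P \<in> {P. is_biquadratic m n P \<and> is_sos m n P}. enat (sos_rank m n P))"

end

theory Submission
  imports Defs "HOL-Analysis.Analysis"
begin


definition ee :: "nat \<Rightarrow> nat \<Rightarrow> real" where "ee i = (\<lambda>t. if t = i then 1 else 0)"
definition ee2 :: "nat \<Rightarrow> nat \<Rightarrow> nat \<Rightarrow> real" where "ee2 i k = (\<lambda>t. ee i t + ee k t)"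

lemma bf_e: assumes "i < m" "j < n" shows "bilinear_form m n C (ee i) (ee j) = C i j"
proof -
  have "\<And>a b. C a b * ee i a * ee j b = (if b = j then (if a = i then C i j else 0) else 0)"
    by (simp add: ee_def)
  then show ?thesis using assms by (simp add: bilinear_form_def)
qed

lemma bf_addl: "bilinear_form m n C (\<lambda>t. a t + b t) y = bilinear_form m n C a y + bilinear_form m n C b y"
  by (simp add: bilinear_form_def algebra_simps sum.distrib)
lemma bf_addr: "bilinear_form m n C x (\<lambda>t. a t + b t) = bilinear_form m n C x a + bilinear_form m n C x b"
  by (simp add: bilinear_form_def algebra_simps sum.distrib)

lemma sq2: fixes a b :: "nat \<Rightarrow> real" shows "(\<Sum>p\<in>A. (a p + b p)^2) = (\<Sum>p\<in>A. a p * a p + b p * b p + 2 * (a p * b p))"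
  by (rule sum.cong) (simp_all add: power2_eq_square algebra_simps)
lemma sq2': fixes a b :: "nat \<Rightarrow> real" shows "(\<Sum>p\<in>A. (a p + b p)^2) = (\<Sum>p\<in>A. a p * a p) + (\<Sum>p\<in>A. b p * b p) + 2 * (\<Sum>p\<in>A. a p * b p)"
  unfolding sq2 by (simp add: sum.distrib sum_distrib_left)

lemma sq4a: fixes a b c d :: "nat \<Rightarrow> real" shows "(\<Sum>p\<in>A. (a p + b p + c p + d p)^2) = (\<Sum>p\<in>A. a p * a p + b p * b p
  + c p * c p + d p * d p
  + 2 * (a p * b p + c p * d p + a p * c p + b p * d p + a p * d p + b p * c p))"
  by (rule sum.cong) (simp_all add: power2_eq_square algebra_simps)

lemma sq4r: fixes a b c d :: "nat \<Rightarrow> real" shows "(\<Sum>p\<in>A. (a p + (b p + (c p + d p)))^2) = (\<Sum>p\<in>A. (a p + b p + c p + d p)^2)"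
  by (simp add: add.assoc)

lemma sq4: fixes a b c d :: "nat \<Rightarrow> real" shows "(\<Sum>p\<in>A. (a p + b p + c p + d p)^2) = (\<Sum>p\<in>A. a p * a p) + (\<Sum>p\<in>A. b p * b p)
  + (\<Sum>p\<in>A. c p * c p) + (\<Sum>p\<in>A. d p * d p)
  + 2 * ((\<Sum>p\<in>A. a p * b p) + (\<Sum>p\<in>A. c p * d p) + (\<Sum>p\<in>A. a p * c p) + (\<Sum>p\<in>A. b p * d p)
       + (\<Sum>p\<in>A. a p * d p) + (\<Sum>p\<in>A. b p * c p))"
  unfolding sq4a by (simp add: sum.distrib sum_distrib_left)



lemma orth_bound:
  fixes w :: "nat \<Rightarrow> nat \<Rightarrow> real"
  assumes orth: "\<And>s t. s < 11 \<Longrightarrow> t < 11 \<Longrightarrow> (\<Sum>p<r. w s p * w t p) = (if s = t then 1 else 0)"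
  shows "11 \<le> r"
proof (rule ccontr)
  assume "\<not> 11 \<le> r"
  hence r10: "r \<le> 10" by simp
  obtain h where h: "bij_betw h (UNIV :: 10 set) {..<(10::nat)}"
    using finite_same_card_bij[of "UNIV::10 set" "{..<(10::nat)}"] by auto
  define w' where "w' s p = (if p < r then w s p else 0)" for s p
  define V where "V s = (\<chi> q. w' s (h q))" for s
  have inn: "V s \<bullet> V t = (if s = t then 1 else 0)" if "s < 11" "t < 11" for s t
  proof -
    have "V s \<bullet> V t = (\<Sum>q\<in>UNIV. w' s (h q) * w' t (h q))"
      by (simp add: V_def inner_vec_def)
    also have "\<dots> = (\<Sum>p<10. w' s p * w' t p)"
      using sum.reindex_bij_betw[OF h, of "\<lambda>p. w' s p * w' t p"] by simp
    also have "\<dots> = (\<Sum>p<r. w' s p * w' t p)"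
      by (rule sum.mono_neutral_right) (use r10 in \<open>auto simp: w'_def\<close>)
    also have "\<dots> = (\<Sum>p<r. w s p * w t p)"
      by (rule sum.cong) (auto simp: w'_def)
    finally show ?thesis using orth that by simp
  qed
  define A where "A = V ` {..<11}"
  have inj: "inj_on V {..<11}"
    by (rule inj_onI) (metis inn lessThan_iff zero_neq_one)
  have "pairwise orthogonal A"
    unfolding A_def pairwise_def orthogonal_def using inn by auto
  moreover have "0 \<notin> A"
    unfolding A_def using inn by (auto, metis inner_zero_left zero_neq_one)
  ultimately have "independent A" by (rule pairwise_orthogonal_independent)
  hence "card A \<le> DIM(real^10)" using independent_bound by blast
  moreover have "card A = 11" unfolding A_def using inj by (simp add: card_image)
  ultimately show False by simp
qed

definition PP :: "(nat \<Rightarrow> real) \<Rightarrow> (nat \<Rightarrow> real) \<Rightarrow> real" where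
  "PP = (\<lambda>x y.
      (x 0)\<^sup>2 * (y 0)\<^sup>2 + (x 0)\<^sup>2 * (y 1)\<^sup>2 + (x 0)\<^sup>2 * (y 2)\<^sup>2
    + (x 1)\<^sup>2 * (y 0)\<^sup>2 + (x 1)\<^sup>2 * (y 3)\<^sup>2
    + (x 2)\<^sup>2 * (y 1)\<^sup>2 + (x 2)\<^sup>2 * (y 3)\<^sup>2
    + (x 3)\<^sup>2 * (y 2)\<^sup>2 + (x 3)\<^sup>2 * (y 3)\<^sup>2
    + (x 4)\<^sup>2 * (y 0)\<^sup>2
    + (x 1 * y 2 + x 4 * y 3)\<^sup>2)"

definition rw :: "nat \<Rightarrow> nat" where "rw s = [0,0,0,1,1,1,2,2,3,3,4] ! s"
definition cl :: "nat \<Rightarrow> nat" where "cl s = [0,1,2,0,2,3,1,3,2,3,0] ! s"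

lemma rwcl: "rw 0 = 0" "cl 0 = 0" "rw 1 = 0" "cl 1 = 1" "rw 2 = 0" "cl 2 = 2" "rw 3 = 1" "cl 3 = 0" "rw 4 = 1" "cl 4 = 2" "rw 5 = 1" "cl 5 = 3" "rw 6 = 2" "cl 6 = 1" "rw 7 = 2" "cl 7 = 3" "rw 8 = 3" "cl 8 = 2" "rw 9 = 3" "cl 9 = 3" "rw 10 = 4" "cl 10 = 0"
  by (simp_all add: rw_def cl_def eval_nat_numeral)

lemma lower:
  fixes c :: "nat \<Rightarrow> nat \<Rightarrow> nat \<Rightarrow> real"
  assumes eq: "\<And>x y. PP x y = (\<Sum>p<r. (bilinear_form 5 4 (c p) x y)\<^sup>2)"
  shows "11 \<le> r"
proof -
  define G where "G i j k l = (\<Sum>p<r. c p i j * c p k l)" for i j k l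
  have Gsym: "G i j k l = G k l i j" for i j k l by (simp add: G_def mult.commute)
  have L1: "G i j i j = PP (ee i) (ee j)" if "i < 5" "j < 4" for i j
    using that by (simp add: eq bf_e G_def power2_eq_square)
  have L2: "G i j i j + G i l i l + 2 * G i j i l = PP (ee i) (ee2 j l)" if "i < 5" "j < 4" "l < 4" for i j l
    using that by (simp add: eq bf_e G_def ee2_def bf_addr sq2')
  have L3: "G i j i j + G k j k j + 2 * G i j k j = PP (ee2 i k) (ee j)" if "i < 5" "k < 5" "j < 4" for i k j
    using that by (simp add: eq bf_e G_def ee2_def bf_addl sq2')
  have L4: "G i j i j + G i l i l + G k j k j + G k l k l + 2 * G i j i l + 2 * G k j k l + 2 * G i j k j + 2 * G i l k l + 2 * G i j k l + 2 * G i l k j = PP (ee2 i k) (ee2 j l)"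
    if "i < 5" "k < 5" "j < 4" "l < 4" for i k j l
  proof -
    have h: "PP (ee2 i k) (ee2 j l) = (\<Sum>p<r. (c p i j + c p i l + c p k j + c p k l)^2)"
      using that by (simp add: eq bf_e ee2_def bf_addl bf_addr add.assoc)
    show ?thesis unfolding h sq4 G_def by (simp add: distrib_left)
  qed
  have Z0: "\<forall>p<r. c p i j = 0" if "G i j i j = 0" for i j
  proof -
    have "\<forall>p\<in>{..<r}. c p i j * c p i j = 0"
      using that unfolding G_def by (subst sum_nonneg_eq_0_iff[symmetric]) auto
    thus ?thesis by simp
  qed
  have Zl: "G i j k l = 0" if "G i j i j = 0" for i j k l
    using Z0[OF that] unfolding G_def by simp
  have Zr: "G k l i j = 0" if "G i j i j = 0" for i j k l
    using Z0[OF that] unfolding G_def by simp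
  have D_0_0: "G 0 0 0 0 = 1"
    using L1[of 0 0] by (simp add: PP_def ee_def ee2_def)
  have D_0_1: "G 0 1 0 1 = 1"
    using L1[of 0 1] by (simp add: PP_def ee_def ee2_def)
  have D_0_2: "G 0 2 0 2 = 1"
    using L1[of 0 2] by (simp add: PP_def ee_def ee2_def)
  have D_0_3: "G 0 3 0 3 = 0"
    using L1[of 0 3] by (simp add: PP_def ee_def ee2_def)
  have D_1_0: "G 1 0 1 0 = 1"
    using L1[of 1 0] by (simp add: PP_def ee_def ee2_def)
  have D_1_1: "G 1 1 1 1 = 0"
    using L1[of 1 1] by (simp add: PP_def ee_def ee2_def)
  have D_1_2: "G 1 2 1 2 = 1"
    using L1[of 1 2] by (simp add: PP_def ee_def ee2_def)
  have D_1_3: "G 1 3 1 3 = 1"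
    using L1[of 1 3] by (simp add: PP_def ee_def ee2_def)
  have D_2_0: "G 2 0 2 0 = 0"
    using L1[of 2 0] by (simp add: PP_def ee_def ee2_def)
  have D_2_1: "G 2 1 2 1 = 1"
    using L1[of 2 1] by (simp add: PP_def ee_def ee2_def)
  have D_2_2: "G 2 2 2 2 = 0"
    using L1[of 2 2] by (simp add: PP_def ee_def ee2_def)
  have D_2_3: "G 2 3 2 3 = 1"
    using L1[of 2 3] by (simp add: PP_def ee_def ee2_def)
  have D_3_0: "G 3 0 3 0 = 0"
    using L1[of 3 0] by (simp add: PP_def ee_def ee2_def)
  have D_3_1: "G 3 1 3 1 = 0"
    using L1[of 3 1] by (simp add: PP_def ee_def ee2_def)
  have D_3_2: "G 3 2 3 2 = 1"
    using L1[of 3 2] by (simp add: PP_def ee_def ee2_def)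
  have D_3_3: "G 3 3 3 3 = 1"
    using L1[of 3 3] by (simp add: PP_def ee_def ee2_def)
  have D_4_0: "G 4 0 4 0 = 1"
    using L1[of 4 0] by (simp add: PP_def ee_def ee2_def)
  have D_4_1: "G 4 1 4 1 = 0"
    using L1[of 4 1] by (simp add: PP_def ee_def ee2_def)
  have D_4_2: "G 4 2 4 2 = 0"
    using L1[of 4 2] by (simp add: PP_def ee_def ee2_def)
  have D_4_3: "G 4 3 4 3 = 1"
    using L1[of 4 3] by (simp add: PP_def ee_def ee2_def)
  have R_0_0_1: "G 0 0 0 0 + G 0 1 0 1 + 2 * G 0 0 0 1 = 2"
    using L2[of 0 0 1] by (simp add: PP_def ee_def ee2_def)
  have R_0_0_2: "G 0 0 0 0 + G 0 2 0 2 + 2 * G 0 0 0 2 = 2"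
    using L2[of 0 0 2] by (simp add: PP_def ee_def ee2_def)
  have R_0_0_3: "G 0 0 0 0 + G 0 3 0 3 + 2 * G 0 0 0 3 = 1"
    using L2[of 0 0 3] by (simp add: PP_def ee_def ee2_def)
  have R_0_1_2: "G 0 1 0 1 + G 0 2 0 2 + 2 * G 0 1 0 2 = 2"
    using L2[of 0 1 2] by (simp add: PP_def ee_def ee2_def)
  have R_0_1_3: "G 0 1 0 1 + G 0 3 0 3 + 2 * G 0 1 0 3 = 1"
    using L2[of 0 1 3] by (simp add: PP_def ee_def ee2_def)
  have R_0_2_3: "G 0 2 0 2 + G 0 3 0 3 + 2 * G 0 2 0 3 = 1"
    using L2[of 0 2 3] by (simp add: PP_def ee_def ee2_def)
  have R_1_0_1: "G 1 0 1 0 + G 1 1 1 1 + 2 * G 1 0 1 1 = 1"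
    using L2[of 1 0 1] by (simp add: PP_def ee_def ee2_def)
  have R_1_0_2: "G 1 0 1 0 + G 1 2 1 2 + 2 * G 1 0 1 2 = 2"
    using L2[of 1 0 2] by (simp add: PP_def ee_def ee2_def)
  have R_1_0_3: "G 1 0 1 0 + G 1 3 1 3 + 2 * G 1 0 1 3 = 2"
    using L2[of 1 0 3] by (simp add: PP_def ee_def ee2_def)
  have R_1_1_2: "G 1 1 1 1 + G 1 2 1 2 + 2 * G 1 1 1 2 = 1"
    using L2[of 1 1 2] by (simp add: PP_def ee_def ee2_def)
  have R_1_1_3: "G 1 1 1 1 + G 1 3 1 3 + 2 * G 1 1 1 3 = 1"
    using L2[of 1 1 3] by (simp add: PP_def ee_def ee2_def)
  have R_1_2_3: "G 1 2 1 2 + G 1 3 1 3 + 2 * G 1 2 1 3 = 2"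
    using L2[of 1 2 3] by (simp add: PP_def ee_def ee2_def)
  have R_2_0_1: "G 2 0 2 0 + G 2 1 2 1 + 2 * G 2 0 2 1 = 1"
    using L2[of 2 0 1] by (simp add: PP_def ee_def ee2_def)
  have R_2_0_2: "G 2 0 2 0 + G 2 2 2 2 + 2 * G 2 0 2 2 = 0"
    using L2[of 2 0 2] by (simp add: PP_def ee_def ee2_def)
  have R_2_0_3: "G 2 0 2 0 + G 2 3 2 3 + 2 * G 2 0 2 3 = 1"
    using L2[of 2 0 3] by (simp add: PP_def ee_def ee2_def)
  have R_2_1_2: "G 2 1 2 1 + G 2 2 2 2 + 2 * G 2 1 2 2 = 1"
    using L2[of 2 1 2] by (simp add: PP_def ee_def ee2_def)
  have R_2_1_3: "G 2 1 2 1 + G 2 3 2 3 + 2 * G 2 1 2 3 = 2"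
    using L2[of 2 1 3] by (simp add: PP_def ee_def ee2_def)
  have R_2_2_3: "G 2 2 2 2 + G 2 3 2 3 + 2 * G 2 2 2 3 = 1"
    using L2[of 2 2 3] by (simp add: PP_def ee_def ee2_def)
  have R_3_0_1: "G 3 0 3 0 + G 3 1 3 1 + 2 * G 3 0 3 1 = 0"
    using L2[of 3 0 1] by (simp add: PP_def ee_def ee2_def)
  have R_3_0_2: "G 3 0 3 0 + G 3 2 3 2 + 2 * G 3 0 3 2 = 1"
    using L2[of 3 0 2] by (simp add: PP_def ee_def ee2_def)
  have R_3_0_3: "G 3 0 3 0 + G 3 3 3 3 + 2 * G 3 0 3 3 = 1"
    using L2[of 3 0 3] by (simp add: PP_def ee_def ee2_def)
  have R_3_1_2: "G 3 1 3 1 + G 3 2 3 2 + 2 * G 3 1 3 2 = 1"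
    using L2[of 3 1 2] by (simp add: PP_def ee_def ee2_def)
  have R_3_1_3: "G 3 1 3 1 + G 3 3 3 3 + 2 * G 3 1 3 3 = 1"
    using L2[of 3 1 3] by (simp add: PP_def ee_def ee2_def)
  have R_3_2_3: "G 3 2 3 2 + G 3 3 3 3 + 2 * G 3 2 3 3 = 2"
    using L2[of 3 2 3] by (simp add: PP_def ee_def ee2_def)
  have R_4_0_1: "G 4 0 4 0 + G 4 1 4 1 + 2 * G 4 0 4 1 = 1"
    using L2[of 4 0 1] by (simp add: PP_def ee_def ee2_def)
  have R_4_0_2: "G 4 0 4 0 + G 4 2 4 2 + 2 * G 4 0 4 2 = 1"
    using L2[of 4 0 2] by (simp add: PP_def ee_def ee2_def)
  have R_4_0_3: "G 4 0 4 0 + G 4 3 4 3 + 2 * G 4 0 4 3 = 2"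
    using L2[of 4 0 3] by (simp add: PP_def ee_def ee2_def)
  have R_4_1_2: "G 4 1 4 1 + G 4 2 4 2 + 2 * G 4 1 4 2 = 0"
    using L2[of 4 1 2] by (simp add: PP_def ee_def ee2_def)
  have R_4_1_3: "G 4 1 4 1 + G 4 3 4 3 + 2 * G 4 1 4 3 = 1"
    using L2[of 4 1 3] by (simp add: PP_def ee_def ee2_def)
  have R_4_2_3: "G 4 2 4 2 + G 4 3 4 3 + 2 * G 4 2 4 3 = 1"
    using L2[of 4 2 3] by (simp add: PP_def ee_def ee2_def)
  have C_0_1_0: "G 0 0 0 0 + G 1 0 1 0 + 2 * G 0 0 1 0 = 2"
    using L3[of 0 1 0] by (simp add: PP_def ee_def ee2_def)
  have C_0_2_0: "G 0 0 0 0 + G 2 0 2 0 + 2 * G 0 0 2 0 = 1"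
    using L3[of 0 2 0] by (simp add: PP_def ee_def ee2_def)
  have C_0_3_0: "G 0 0 0 0 + G 3 0 3 0 + 2 * G 0 0 3 0 = 1"
    using L3[of 0 3 0] by (simp add: PP_def ee_def ee2_def)
  have C_0_4_0: "G 0 0 0 0 + G 4 0 4 0 + 2 * G 0 0 4 0 = 2"
    using L3[of 0 4 0] by (simp add: PP_def ee_def ee2_def)
  have C_1_2_0: "G 1 0 1 0 + G 2 0 2 0 + 2 * G 1 0 2 0 = 1"
    using L3[of 1 2 0] by (simp add: PP_def ee_def ee2_def)
  have C_1_3_0: "G 1 0 1 0 + G 3 0 3 0 + 2 * G 1 0 3 0 = 1"
    using L3[of 1 3 0] by (simp add: PP_def ee_def ee2_def)
  have C_1_4_0: "G 1 0 1 0 + G 4 0 4 0 + 2 * G 1 0 4 0 = 2"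
    using L3[of 1 4 0] by (simp add: PP_def ee_def ee2_def)
  have C_2_3_0: "G 2 0 2 0 + G 3 0 3 0 + 2 * G 2 0 3 0 = 0"
    using L3[of 2 3 0] by (simp add: PP_def ee_def ee2_def)
  have C_2_4_0: "G 2 0 2 0 + G 4 0 4 0 + 2 * G 2 0 4 0 = 1"
    using L3[of 2 4 0] by (simp add: PP_def ee_def ee2_def)
  have C_3_4_0: "G 3 0 3 0 + G 4 0 4 0 + 2 * G 3 0 4 0 = 1"
    using L3[of 3 4 0] by (simp add: PP_def ee_def ee2_def)
  have C_0_1_1: "G 0 1 0 1 + G 1 1 1 1 + 2 * G 0 1 1 1 = 1"
    using L3[of 0 1 1] by (simp add: PP_def ee_def ee2_def)
  have C_0_2_1: "G 0 1 0 1 + G 2 1 2 1 + 2 * G 0 1 2 1 = 2"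
    using L3[of 0 2 1] by (simp add: PP_def ee_def ee2_def)
  have C_0_3_1: "G 0 1 0 1 + G 3 1 3 1 + 2 * G 0 1 3 1 = 1"
    using L3[of 0 3 1] by (simp add: PP_def ee_def ee2_def)
  have C_0_4_1: "G 0 1 0 1 + G 4 1 4 1 + 2 * G 0 1 4 1 = 1"
    using L3[of 0 4 1] by (simp add: PP_def ee_def ee2_def)
  have C_1_2_1: "G 1 1 1 1 + G 2 1 2 1 + 2 * G 1 1 2 1 = 1"
    using L3[of 1 2 1] by (simp add: PP_def ee_def ee2_def)
  have C_1_3_1: "G 1 1 1 1 + G 3 1 3 1 + 2 * G 1 1 3 1 = 0"
    using L3[of 1 3 1] by (simp add: PP_def ee_def ee2_def)
  have C_1_4_1: "G 1 1 1 1 + G 4 1 4 1 + 2 * G 1 1 4 1 = 0"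
    using L3[of 1 4 1] by (simp add: PP_def ee_def ee2_def)
  have C_2_3_1: "G 2 1 2 1 + G 3 1 3 1 + 2 * G 2 1 3 1 = 1"
    using L3[of 2 3 1] by (simp add: PP_def ee_def ee2_def)
  have C_2_4_1: "G 2 1 2 1 + G 4 1 4 1 + 2 * G 2 1 4 1 = 1"
    using L3[of 2 4 1] by (simp add: PP_def ee_def ee2_def)
  have C_3_4_1: "G 3 1 3 1 + G 4 1 4 1 + 2 * G 3 1 4 1 = 0"
    using L3[of 3 4 1] by (simp add: PP_def ee_def ee2_def)
  have C_0_1_2: "G 0 2 0 2 + G 1 2 1 2 + 2 * G 0 2 1 2 = 2"
    using L3[of 0 1 2] by (simp add: PP_def ee_def ee2_def)
  have C_0_2_2: "G 0 2 0 2 + G 2 2 2 2 + 2 * G 0 2 2 2 = 1"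
    using L3[of 0 2 2] by (simp add: PP_def ee_def ee2_def)
  have C_0_3_2: "G 0 2 0 2 + G 3 2 3 2 + 2 * G 0 2 3 2 = 2"
    using L3[of 0 3 2] by (simp add: PP_def ee_def ee2_def)
  have C_0_4_2: "G 0 2 0 2 + G 4 2 4 2 + 2 * G 0 2 4 2 = 1"
    using L3[of 0 4 2] by (simp add: PP_def ee_def ee2_def)
  have C_1_2_2: "G 1 2 1 2 + G 2 2 2 2 + 2 * G 1 2 2 2 = 1"
    using L3[of 1 2 2] by (simp add: PP_def ee_def ee2_def)
  have C_1_3_2: "G 1 2 1 2 + G 3 2 3 2 + 2 * G 1 2 3 2 = 2"
    using L3[of 1 3 2] by (simp add: PP_def ee_def ee2_def)
  have C_1_4_2: "G 1 2 1 2 + G 4 2 4 2 + 2 * G 1 2 4 2 = 1"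
    using L3[of 1 4 2] by (simp add: PP_def ee_def ee2_def)
  have C_2_3_2: "G 2 2 2 2 + G 3 2 3 2 + 2 * G 2 2 3 2 = 1"
    using L3[of 2 3 2] by (simp add: PP_def ee_def ee2_def)
  have C_2_4_2: "G 2 2 2 2 + G 4 2 4 2 + 2 * G 2 2 4 2 = 0"
    using L3[of 2 4 2] by (simp add: PP_def ee_def ee2_def)
  have C_3_4_2: "G 3 2 3 2 + G 4 2 4 2 + 2 * G 3 2 4 2 = 1"
    using L3[of 3 4 2] by (simp add: PP_def ee_def ee2_def)
  have C_0_1_3: "G 0 3 0 3 + G 1 3 1 3 + 2 * G 0 3 1 3 = 1"
    using L3[of 0 1 3] by (simp add: PP_def ee_def ee2_def)
  have C_0_2_3: "G 0 3 0 3 + G 2 3 2 3 + 2 * G 0 3 2 3 = 1"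
    using L3[of 0 2 3] by (simp add: PP_def ee_def ee2_def)
  have C_0_3_3: "G 0 3 0 3 + G 3 3 3 3 + 2 * G 0 3 3 3 = 1"
    using L3[of 0 3 3] by (simp add: PP_def ee_def ee2_def)
  have C_0_4_3: "G 0 3 0 3 + G 4 3 4 3 + 2 * G 0 3 4 3 = 1"
    using L3[of 0 4 3] by (simp add: PP_def ee_def ee2_def)
  have C_1_2_3: "G 1 3 1 3 + G 2 3 2 3 + 2 * G 1 3 2 3 = 2"
    using L3[of 1 2 3] by (simp add: PP_def ee_def ee2_def)
  have C_1_3_3: "G 1 3 1 3 + G 3 3 3 3 + 2 * G 1 3 3 3 = 2"
    using L3[of 1 3 3] by (simp add: PP_def ee_def ee2_def)
  have C_1_4_3: "G 1 3 1 3 + G 4 3 4 3 + 2 * G 1 3 4 3 = 2"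
    using L3[of 1 4 3] by (simp add: PP_def ee_def ee2_def)
  have C_2_3_3: "G 2 3 2 3 + G 3 3 3 3 + 2 * G 2 3 3 3 = 2"
    using L3[of 2 3 3] by (simp add: PP_def ee_def ee2_def)
  have C_2_4_3: "G 2 3 2 3 + G 4 3 4 3 + 2 * G 2 3 4 3 = 2"
    using L3[of 2 4 3] by (simp add: PP_def ee_def ee2_def)
  have C_3_4_3: "G 3 3 3 3 + G 4 3 4 3 + 2 * G 3 3 4 3 = 2"
    using L3[of 3 4 3] by (simp add: PP_def ee_def ee2_def)
  have X_0_1_0_1: "G 0 0 0 0 + G 0 1 0 1 + G 1 0 1 0 + G 1 1 1 1 + 2 * G 0 0 0 1 + 2 * G 1 0 1 1 + 2 * G 0 0 1 0 + 2 * G 0 1 1 1 + 2 * G 0 0 1 1 + 2 * G 0 1 1 0 = 3"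
    using L4[of 0 1 0 1] by (simp add: PP_def ee_def ee2_def)
  have X_0_1_0_2: "G 0 0 0 0 + G 0 2 0 2 + G 1 0 1 0 + G 1 2 1 2 + 2 * G 0 0 0 2 + 2 * G 1 0 1 2 + 2 * G 0 0 1 0 + 2 * G 0 2 1 2 + 2 * G 0 0 1 2 + 2 * G 0 2 1 0 = 4"
    using L4[of 0 1 0 2] by (simp add: PP_def ee_def ee2_def)
  have X_0_1_0_3: "G 0 0 0 0 + G 0 3 0 3 + G 1 0 1 0 + G 1 3 1 3 + 2 * G 0 0 0 3 + 2 * G 1 0 1 3 + 2 * G 0 0 1 0 + 2 * G 0 3 1 3 + 2 * G 0 0 1 3 + 2 * G 0 3 1 0 = 3"
    using L4[of 0 1 0 3] by (simp add: PP_def ee_def ee2_def)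
  have X_0_1_1_2: "G 0 1 0 1 + G 0 2 0 2 + G 1 1 1 1 + G 1 2 1 2 + 2 * G 0 1 0 2 + 2 * G 1 1 1 2 + 2 * G 0 1 1 1 + 2 * G 0 2 1 2 + 2 * G 0 1 1 2 + 2 * G 0 2 1 1 = 3"
    using L4[of 0 1 1 2] by (simp add: PP_def ee_def ee2_def)
  have X_0_1_1_3: "G 0 1 0 1 + G 0 3 0 3 + G 1 1 1 1 + G 1 3 1 3 + 2 * G 0 1 0 3 + 2 * G 1 1 1 3 + 2 * G 0 1 1 1 + 2 * G 0 3 1 3 + 2 * G 0 1 1 3 + 2 * G 0 3 1 1 = 2"
    using L4[of 0 1 1 3] by (simp add: PP_def ee_def ee2_def)
  have X_0_1_2_3: "G 0 2 0 2 + G 0 3 0 3 + G 1 2 1 2 + G 1 3 1 3 + 2 * G 0 2 0 3 + 2 * G 1 2 1 3 + 2 * G 0 2 1 2 + 2 * G 0 3 1 3 + 2 * G 0 2 1 3 + 2 * G 0 3 1 2 = 3"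
    using L4[of 0 1 2 3] by (simp add: PP_def ee_def ee2_def)
  have X_0_2_0_1: "G 0 0 0 0 + G 0 1 0 1 + G 2 0 2 0 + G 2 1 2 1 + 2 * G 0 0 0 1 + 2 * G 2 0 2 1 + 2 * G 0 0 2 0 + 2 * G 0 1 2 1 + 2 * G 0 0 2 1 + 2 * G 0 1 2 0 = 3"
    using L4[of 0 2 0 1] by (simp add: PP_def ee_def ee2_def)
  have X_0_2_0_2: "G 0 0 0 0 + G 0 2 0 2 + G 2 0 2 0 + G 2 2 2 2 + 2 * G 0 0 0 2 + 2 * G 2 0 2 2 + 2 * G 0 0 2 0 + 2 * G 0 2 2 2 + 2 * G 0 0 2 2 + 2 * G 0 2 2 0 = 2"
    using L4[of 0 2 0 2] by (simp add: PP_def ee_def ee2_def)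
  have X_0_2_0_3: "G 0 0 0 0 + G 0 3 0 3 + G 2 0 2 0 + G 2 3 2 3 + 2 * G 0 0 0 3 + 2 * G 2 0 2 3 + 2 * G 0 0 2 0 + 2 * G 0 3 2 3 + 2 * G 0 0 2 3 + 2 * G 0 3 2 0 = 2"
    using L4[of 0 2 0 3] by (simp add: PP_def ee_def ee2_def)
  have X_0_2_1_2: "G 0 1 0 1 + G 0 2 0 2 + G 2 1 2 1 + G 2 2 2 2 + 2 * G 0 1 0 2 + 2 * G 2 1 2 2 + 2 * G 0 1 2 1 + 2 * G 0 2 2 2 + 2 * G 0 1 2 2 + 2 * G 0 2 2 1 = 3"
    using L4[of 0 2 1 2] by (simp add: PP_def ee_def ee2_def)
  have X_0_2_1_3: "G 0 1 0 1 + G 0 3 0 3 + G 2 1 2 1 + G 2 3 2 3 + 2 * G 0 1 0 3 + 2 * G 2 1 2 3 + 2 * G 0 1 2 1 + 2 * G 0 3 2 3 + 2 * G 0 1 2 3 + 2 * G 0 3 2 1 = 3"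
    using L4[of 0 2 1 3] by (simp add: PP_def ee_def ee2_def)
  have X_0_2_2_3: "G 0 2 0 2 + G 0 3 0 3 + G 2 2 2 2 + G 2 3 2 3 + 2 * G 0 2 0 3 + 2 * G 2 2 2 3 + 2 * G 0 2 2 2 + 2 * G 0 3 2 3 + 2 * G 0 2 2 3 + 2 * G 0 3 2 2 = 2"
    using L4[of 0 2 2 3] by (simp add: PP_def ee_def ee2_def)
  have X_0_3_0_1: "G 0 0 0 0 + G 0 1 0 1 + G 3 0 3 0 + G 3 1 3 1 + 2 * G 0 0 0 1 + 2 * G 3 0 3 1 + 2 * G 0 0 3 0 + 2 * G 0 1 3 1 + 2 * G 0 0 3 1 + 2 * G 0 1 3 0 = 2"
    using L4[of 0 3 0 1] by (simp add: PP_def ee_def ee2_def)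
  have X_0_3_0_2: "G 0 0 0 0 + G 0 2 0 2 + G 3 0 3 0 + G 3 2 3 2 + 2 * G 0 0 0 2 + 2 * G 3 0 3 2 + 2 * G 0 0 3 0 + 2 * G 0 2 3 2 + 2 * G 0 0 3 2 + 2 * G 0 2 3 0 = 3"
    using L4[of 0 3 0 2] by (simp add: PP_def ee_def ee2_def)
  have X_0_3_0_3: "G 0 0 0 0 + G 0 3 0 3 + G 3 0 3 0 + G 3 3 3 3 + 2 * G 0 0 0 3 + 2 * G 3 0 3 3 + 2 * G 0 0 3 0 + 2 * G 0 3 3 3 + 2 * G 0 0 3 3 + 2 * G 0 3 3 0 = 2"
    using L4[of 0 3 0 3] by (simp add: PP_def ee_def ee2_def)
  have X_0_3_1_2: "G 0 1 0 1 + G 0 2 0 2 + G 3 1 3 1 + G 3 2 3 2 + 2 * G 0 1 0 2 + 2 * G 3 1 3 2 + 2 * G 0 1 3 1 + 2 * G 0 2 3 2 + 2 * G 0 1 3 2 + 2 * G 0 2 3 1 = 3"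
    using L4[of 0 3 1 2] by (simp add: PP_def ee_def ee2_def)
  have X_0_3_1_3: "G 0 1 0 1 + G 0 3 0 3 + G 3 1 3 1 + G 3 3 3 3 + 2 * G 0 1 0 3 + 2 * G 3 1 3 3 + 2 * G 0 1 3 1 + 2 * G 0 3 3 3 + 2 * G 0 1 3 3 + 2 * G 0 3 3 1 = 2"
    using L4[of 0 3 1 3] by (simp add: PP_def ee_def ee2_def)
  have X_0_3_2_3: "G 0 2 0 2 + G 0 3 0 3 + G 3 2 3 2 + G 3 3 3 3 + 2 * G 0 2 0 3 + 2 * G 3 2 3 3 + 2 * G 0 2 3 2 + 2 * G 0 3 3 3 + 2 * G 0 2 3 3 + 2 * G 0 3 3 2 = 3"
    using L4[of 0 3 2 3] by (simp add: PP_def ee_def ee2_def)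
  have X_0_4_0_1: "G 0 0 0 0 + G 0 1 0 1 + G 4 0 4 0 + G 4 1 4 1 + 2 * G 0 0 0 1 + 2 * G 4 0 4 1 + 2 * G 0 0 4 0 + 2 * G 0 1 4 1 + 2 * G 0 0 4 1 + 2 * G 0 1 4 0 = 3"
    using L4[of 0 4 0 1] by (simp add: PP_def ee_def ee2_def)
  have X_0_4_0_2: "G 0 0 0 0 + G 0 2 0 2 + G 4 0 4 0 + G 4 2 4 2 + 2 * G 0 0 0 2 + 2 * G 4 0 4 2 + 2 * G 0 0 4 0 + 2 * G 0 2 4 2 + 2 * G 0 0 4 2 + 2 * G 0 2 4 0 = 3"
    using L4[of 0 4 0 2] by (simp add: PP_def ee_def ee2_def)
  have X_0_4_0_3: "G 0 0 0 0 + G 0 3 0 3 + G 4 0 4 0 + G 4 3 4 3 + 2 * G 0 0 0 3 + 2 * G 4 0 4 3 + 2 * G 0 0 4 0 + 2 * G 0 3 4 3 + 2 * G 0 0 4 3 + 2 * G 0 3 4 0 = 3"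
    using L4[of 0 4 0 3] by (simp add: PP_def ee_def ee2_def)
  have X_0_4_1_2: "G 0 1 0 1 + G 0 2 0 2 + G 4 1 4 1 + G 4 2 4 2 + 2 * G 0 1 0 2 + 2 * G 4 1 4 2 + 2 * G 0 1 4 1 + 2 * G 0 2 4 2 + 2 * G 0 1 4 2 + 2 * G 0 2 4 1 = 2"
    using L4[of 0 4 1 2] by (simp add: PP_def ee_def ee2_def)
  have X_0_4_1_3: "G 0 1 0 1 + G 0 3 0 3 + G 4 1 4 1 + G 4 3 4 3 + 2 * G 0 1 0 3 + 2 * G 4 1 4 3 + 2 * G 0 1 4 1 + 2 * G 0 3 4 3 + 2 * G 0 1 4 3 + 2 * G 0 3 4 1 = 2"
    using L4[of 0 4 1 3] by (simp add: PP_def ee_def ee2_def)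
  have X_0_4_2_3: "G 0 2 0 2 + G 0 3 0 3 + G 4 2 4 2 + G 4 3 4 3 + 2 * G 0 2 0 3 + 2 * G 4 2 4 3 + 2 * G 0 2 4 2 + 2 * G 0 3 4 3 + 2 * G 0 2 4 3 + 2 * G 0 3 4 2 = 2"
    using L4[of 0 4 2 3] by (simp add: PP_def ee_def ee2_def)
  have X_1_2_0_1: "G 1 0 1 0 + G 1 1 1 1 + G 2 0 2 0 + G 2 1 2 1 + 2 * G 1 0 1 1 + 2 * G 2 0 2 1 + 2 * G 1 0 2 0 + 2 * G 1 1 2 1 + 2 * G 1 0 2 1 + 2 * G 1 1 2 0 = 2"
    using L4[of 1 2 0 1] by (simp add: PP_def ee_def ee2_def)
  have X_1_2_0_2: "G 1 0 1 0 + G 1 2 1 2 + G 2 0 2 0 + G 2 2 2 2 + 2 * G 1 0 1 2 + 2 * G 2 0 2 2 + 2 * G 1 0 2 0 + 2 * G 1 2 2 2 + 2 * G 1 0 2 2 + 2 * G 1 2 2 0 = 2"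
    using L4[of 1 2 0 2] by (simp add: PP_def ee_def ee2_def)
  have X_1_2_0_3: "G 1 0 1 0 + G 1 3 1 3 + G 2 0 2 0 + G 2 3 2 3 + 2 * G 1 0 1 3 + 2 * G 2 0 2 3 + 2 * G 1 0 2 0 + 2 * G 1 3 2 3 + 2 * G 1 0 2 3 + 2 * G 1 3 2 0 = 3"
    using L4[of 1 2 0 3] by (simp add: PP_def ee_def ee2_def)
  have X_1_2_1_2: "G 1 1 1 1 + G 1 2 1 2 + G 2 1 2 1 + G 2 2 2 2 + 2 * G 1 1 1 2 + 2 * G 2 1 2 2 + 2 * G 1 1 2 1 + 2 * G 1 2 2 2 + 2 * G 1 1 2 2 + 2 * G 1 2 2 1 = 2"
    using L4[of 1 2 1 2] by (simp add: PP_def ee_def ee2_def)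
  have X_1_2_1_3: "G 1 1 1 1 + G 1 3 1 3 + G 2 1 2 1 + G 2 3 2 3 + 2 * G 1 1 1 3 + 2 * G 2 1 2 3 + 2 * G 1 1 2 1 + 2 * G 1 3 2 3 + 2 * G 1 1 2 3 + 2 * G 1 3 2 1 = 3"
    using L4[of 1 2 1 3] by (simp add: PP_def ee_def ee2_def)
  have X_1_2_2_3: "G 1 2 1 2 + G 1 3 1 3 + G 2 2 2 2 + G 2 3 2 3 + 2 * G 1 2 1 3 + 2 * G 2 2 2 3 + 2 * G 1 2 2 2 + 2 * G 1 3 2 3 + 2 * G 1 2 2 3 + 2 * G 1 3 2 2 = 3"
    using L4[of 1 2 2 3] by (simp add: PP_def ee_def ee2_def)
  have X_1_3_0_1: "G 1 0 1 0 + G 1 1 1 1 + G 3 0 3 0 + G 3 1 3 1 + 2 * G 1 0 1 1 + 2 * G 3 0 3 1 + 2 * G 1 0 3 0 + 2 * G 1 1 3 1 + 2 * G 1 0 3 1 + 2 * G 1 1 3 0 = 1"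
    using L4[of 1 3 0 1] by (simp add: PP_def ee_def ee2_def)
  have X_1_3_0_2: "G 1 0 1 0 + G 1 2 1 2 + G 3 0 3 0 + G 3 2 3 2 + 2 * G 1 0 1 2 + 2 * G 3 0 3 2 + 2 * G 1 0 3 0 + 2 * G 1 2 3 2 + 2 * G 1 0 3 2 + 2 * G 1 2 3 0 = 3"
    using L4[of 1 3 0 2] by (simp add: PP_def ee_def ee2_def)
  have X_1_3_0_3: "G 1 0 1 0 + G 1 3 1 3 + G 3 0 3 0 + G 3 3 3 3 + 2 * G 1 0 1 3 + 2 * G 3 0 3 3 + 2 * G 1 0 3 0 + 2 * G 1 3 3 3 + 2 * G 1 0 3 3 + 2 * G 1 3 3 0 = 3"
    using L4[of 1 3 0 3] by (simp add: PP_def ee_def ee2_def)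
  have X_1_3_1_2: "G 1 1 1 1 + G 1 2 1 2 + G 3 1 3 1 + G 3 2 3 2 + 2 * G 1 1 1 2 + 2 * G 3 1 3 2 + 2 * G 1 1 3 1 + 2 * G 1 2 3 2 + 2 * G 1 1 3 2 + 2 * G 1 2 3 1 = 2"
    using L4[of 1 3 1 2] by (simp add: PP_def ee_def ee2_def)
  have X_1_3_1_3: "G 1 1 1 1 + G 1 3 1 3 + G 3 1 3 1 + G 3 3 3 3 + 2 * G 1 1 1 3 + 2 * G 3 1 3 3 + 2 * G 1 1 3 1 + 2 * G 1 3 3 3 + 2 * G 1 1 3 3 + 2 * G 1 3 3 1 = 2"
    using L4[of 1 3 1 3] by (simp add: PP_def ee_def ee2_def)
  have X_1_3_2_3: "G 1 2 1 2 + G 1 3 1 3 + G 3 2 3 2 + G 3 3 3 3 + 2 * G 1 2 1 3 + 2 * G 3 2 3 3 + 2 * G 1 2 3 2 + 2 * G 1 3 3 3 + 2 * G 1 2 3 3 + 2 * G 1 3 3 2 = 4"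
    using L4[of 1 3 2 3] by (simp add: PP_def ee_def ee2_def)
  have X_1_4_0_1: "G 1 0 1 0 + G 1 1 1 1 + G 4 0 4 0 + G 4 1 4 1 + 2 * G 1 0 1 1 + 2 * G 4 0 4 1 + 2 * G 1 0 4 0 + 2 * G 1 1 4 1 + 2 * G 1 0 4 1 + 2 * G 1 1 4 0 = 2"
    using L4[of 1 4 0 1] by (simp add: PP_def ee_def ee2_def)
  have X_1_4_0_2: "G 1 0 1 0 + G 1 2 1 2 + G 4 0 4 0 + G 4 2 4 2 + 2 * G 1 0 1 2 + 2 * G 4 0 4 2 + 2 * G 1 0 4 0 + 2 * G 1 2 4 2 + 2 * G 1 0 4 2 + 2 * G 1 2 4 0 = 3"
    using L4[of 1 4 0 2] by (simp add: PP_def ee_def ee2_def)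
  have X_1_4_0_3: "G 1 0 1 0 + G 1 3 1 3 + G 4 0 4 0 + G 4 3 4 3 + 2 * G 1 0 1 3 + 2 * G 4 0 4 3 + 2 * G 1 0 4 0 + 2 * G 1 3 4 3 + 2 * G 1 0 4 3 + 2 * G 1 3 4 0 = 4"
    using L4[of 1 4 0 3] by (simp add: PP_def ee_def ee2_def)
  have X_1_4_1_2: "G 1 1 1 1 + G 1 2 1 2 + G 4 1 4 1 + G 4 2 4 2 + 2 * G 1 1 1 2 + 2 * G 4 1 4 2 + 2 * G 1 1 4 1 + 2 * G 1 2 4 2 + 2 * G 1 1 4 2 + 2 * G 1 2 4 1 = 1"
    using L4[of 1 4 1 2] by (simp add: PP_def ee_def ee2_def)
  have X_1_4_1_3: "G 1 1 1 1 + G 1 3 1 3 + G 4 1 4 1 + G 4 3 4 3 + 2 * G 1 1 1 3 + 2 * G 4 1 4 3 + 2 * G 1 1 4 1 + 2 * G 1 3 4 3 + 2 * G 1 1 4 3 + 2 * G 1 3 4 1 = 2"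
    using L4[of 1 4 1 3] by (simp add: PP_def ee_def ee2_def)
  have X_1_4_2_3: "G 1 2 1 2 + G 1 3 1 3 + G 4 2 4 2 + G 4 3 4 3 + 2 * G 1 2 1 3 + 2 * G 4 2 4 3 + 2 * G 1 2 4 2 + 2 * G 1 3 4 3 + 2 * G 1 2 4 3 + 2 * G 1 3 4 2 = 5"
    using L4[of 1 4 2 3] by (simp add: PP_def ee_def ee2_def)
  have X_2_3_0_1: "G 2 0 2 0 + G 2 1 2 1 + G 3 0 3 0 + G 3 1 3 1 + 2 * G 2 0 2 1 + 2 * G 3 0 3 1 + 2 * G 2 0 3 0 + 2 * G 2 1 3 1 + 2 * G 2 0 3 1 + 2 * G 2 1 3 0 = 1"
    using L4[of 2 3 0 1] by (simp add: PP_def ee_def ee2_def)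
  have X_2_3_0_2: "G 2 0 2 0 + G 2 2 2 2 + G 3 0 3 0 + G 3 2 3 2 + 2 * G 2 0 2 2 + 2 * G 3 0 3 2 + 2 * G 2 0 3 0 + 2 * G 2 2 3 2 + 2 * G 2 0 3 2 + 2 * G 2 2 3 0 = 1"
    using L4[of 2 3 0 2] by (simp add: PP_def ee_def ee2_def)
  have X_2_3_0_3: "G 2 0 2 0 + G 2 3 2 3 + G 3 0 3 0 + G 3 3 3 3 + 2 * G 2 0 2 3 + 2 * G 3 0 3 3 + 2 * G 2 0 3 0 + 2 * G 2 3 3 3 + 2 * G 2 0 3 3 + 2 * G 2 3 3 0 = 2"
    using L4[of 2 3 0 3] by (simp add: PP_def ee_def ee2_def)
  have X_2_3_1_2: "G 2 1 2 1 + G 2 2 2 2 + G 3 1 3 1 + G 3 2 3 2 + 2 * G 2 1 2 2 + 2 * G 3 1 3 2 + 2 * G 2 1 3 1 + 2 * G 2 2 3 2 + 2 * G 2 1 3 2 + 2 * G 2 2 3 1 = 2"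
    using L4[of 2 3 1 2] by (simp add: PP_def ee_def ee2_def)
  have X_2_3_1_3: "G 2 1 2 1 + G 2 3 2 3 + G 3 1 3 1 + G 3 3 3 3 + 2 * G 2 1 2 3 + 2 * G 3 1 3 3 + 2 * G 2 1 3 1 + 2 * G 2 3 3 3 + 2 * G 2 1 3 3 + 2 * G 2 3 3 1 = 3"
    using L4[of 2 3 1 3] by (simp add: PP_def ee_def ee2_def)
  have X_2_3_2_3: "G 2 2 2 2 + G 2 3 2 3 + G 3 2 3 2 + G 3 3 3 3 + 2 * G 2 2 2 3 + 2 * G 3 2 3 3 + 2 * G 2 2 3 2 + 2 * G 2 3 3 3 + 2 * G 2 2 3 3 + 2 * G 2 3 3 2 = 3"
    using L4[of 2 3 2 3] by (simp add: PP_def ee_def ee2_def)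
  have X_2_4_0_1: "G 2 0 2 0 + G 2 1 2 1 + G 4 0 4 0 + G 4 1 4 1 + 2 * G 2 0 2 1 + 2 * G 4 0 4 1 + 2 * G 2 0 4 0 + 2 * G 2 1 4 1 + 2 * G 2 0 4 1 + 2 * G 2 1 4 0 = 2"
    using L4[of 2 4 0 1] by (simp add: PP_def ee_def ee2_def)
  have X_2_4_0_2: "G 2 0 2 0 + G 2 2 2 2 + G 4 0 4 0 + G 4 2 4 2 + 2 * G 2 0 2 2 + 2 * G 4 0 4 2 + 2 * G 2 0 4 0 + 2 * G 2 2 4 2 + 2 * G 2 0 4 2 + 2 * G 2 2 4 0 = 1"
    using L4[of 2 4 0 2] by (simp add: PP_def ee_def ee2_def)
  have X_2_4_0_3: "G 2 0 2 0 + G 2 3 2 3 + G 4 0 4 0 + G 4 3 4 3 + 2 * G 2 0 2 3 + 2 * G 4 0 4 3 + 2 * G 2 0 4 0 + 2 * G 2 3 4 3 + 2 * G 2 0 4 3 + 2 * G 2 3 4 0 = 3"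
    using L4[of 2 4 0 3] by (simp add: PP_def ee_def ee2_def)
  have X_2_4_1_2: "G 2 1 2 1 + G 2 2 2 2 + G 4 1 4 1 + G 4 2 4 2 + 2 * G 2 1 2 2 + 2 * G 4 1 4 2 + 2 * G 2 1 4 1 + 2 * G 2 2 4 2 + 2 * G 2 1 4 2 + 2 * G 2 2 4 1 = 1"
    using L4[of 2 4 1 2] by (simp add: PP_def ee_def ee2_def)
  have X_2_4_1_3: "G 2 1 2 1 + G 2 3 2 3 + G 4 1 4 1 + G 4 3 4 3 + 2 * G 2 1 2 3 + 2 * G 4 1 4 3 + 2 * G 2 1 4 1 + 2 * G 2 3 4 3 + 2 * G 2 1 4 3 + 2 * G 2 3 4 1 = 3"
    using L4[of 2 4 1 3] by (simp add: PP_def ee_def ee2_def)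
  have X_2_4_2_3: "G 2 2 2 2 + G 2 3 2 3 + G 4 2 4 2 + G 4 3 4 3 + 2 * G 2 2 2 3 + 2 * G 4 2 4 3 + 2 * G 2 2 4 2 + 2 * G 2 3 4 3 + 2 * G 2 2 4 3 + 2 * G 2 3 4 2 = 2"
    using L4[of 2 4 2 3] by (simp add: PP_def ee_def ee2_def)
  have X_3_4_0_1: "G 3 0 3 0 + G 3 1 3 1 + G 4 0 4 0 + G 4 1 4 1 + 2 * G 3 0 3 1 + 2 * G 4 0 4 1 + 2 * G 3 0 4 0 + 2 * G 3 1 4 1 + 2 * G 3 0 4 1 + 2 * G 3 1 4 0 = 1"
    using L4[of 3 4 0 1] by (simp add: PP_def ee_def ee2_def)
  have X_3_4_0_2: "G 3 0 3 0 + G 3 2 3 2 + G 4 0 4 0 + G 4 2 4 2 + 2 * G 3 0 3 2 + 2 * G 4 0 4 2 + 2 * G 3 0 4 0 + 2 * G 3 2 4 2 + 2 * G 3 0 4 2 + 2 * G 3 2 4 0 = 2"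
    using L4[of 3 4 0 2] by (simp add: PP_def ee_def ee2_def)
  have X_3_4_0_3: "G 3 0 3 0 + G 3 3 3 3 + G 4 0 4 0 + G 4 3 4 3 + 2 * G 3 0 3 3 + 2 * G 4 0 4 3 + 2 * G 3 0 4 0 + 2 * G 3 3 4 3 + 2 * G 3 0 4 3 + 2 * G 3 3 4 0 = 3"
    using L4[of 3 4 0 3] by (simp add: PP_def ee_def ee2_def)
  have X_3_4_1_2: "G 3 1 3 1 + G 3 2 3 2 + G 4 1 4 1 + G 4 2 4 2 + 2 * G 3 1 3 2 + 2 * G 4 1 4 2 + 2 * G 3 1 4 1 + 2 * G 3 2 4 2 + 2 * G 3 1 4 2 + 2 * G 3 2 4 1 = 1"
    using L4[of 3 4 1 2] by (simp add: PP_def ee_def ee2_def)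
  have X_3_4_1_3: "G 3 1 3 1 + G 3 3 3 3 + G 4 1 4 1 + G 4 3 4 3 + 2 * G 3 1 3 3 + 2 * G 4 1 4 3 + 2 * G 3 1 4 1 + 2 * G 3 3 4 3 + 2 * G 3 1 4 3 + 2 * G 3 3 4 1 = 2"
    using L4[of 3 4 1 3] by (simp add: PP_def ee_def ee2_def)
  have X_3_4_2_3: "G 3 2 3 2 + G 3 3 3 3 + G 4 2 4 2 + G 4 3 4 3 + 2 * G 3 2 3 3 + 2 * G 4 2 4 3 + 2 * G 3 2 4 2 + 2 * G 3 3 4 3 + 2 * G 3 2 4 3 + 2 * G 3 3 4 2 = 3"
    using L4[of 3 4 2 3] by (simp add: PP_def ee_def ee2_def)
  have Zl_0_3: "\<And>k l. G 0 3 k l = 0"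
    using Zl D_0_3 by blast
  have Zr_0_3: "\<And>k l. G k l 0 3 = 0"
    using Zr D_0_3 by blast
  have Zl_1_1: "\<And>k l. G 1 1 k l = 0"
    using Zl D_1_1 by blast
  have Zr_1_1: "\<And>k l. G k l 1 1 = 0"
    using Zr D_1_1 by blast
  have Zl_2_0: "\<And>k l. G 2 0 k l = 0"
    using Zl D_2_0 by blast
  have Zr_2_0: "\<And>k l. G k l 2 0 = 0"
    using Zr D_2_0 by blast
  have Zl_2_2: "\<And>k l. G 2 2 k l = 0"
    using Zl D_2_2 by blast
  have Zr_2_2: "\<And>k l. G k l 2 2 = 0"
    using Zr D_2_2 by blast
  have Zl_3_0: "\<And>k l. G 3 0 k l = 0"
    using Zl D_3_0 by blast
  have Zr_3_0: "\<And>k l. G k l 3 0 = 0"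
    using Zr D_3_0 by blast
  have Zl_3_1: "\<And>k l. G 3 1 k l = 0"
    using Zl D_3_1 by blast
  have Zr_3_1: "\<And>k l. G k l 3 1 = 0"
    using Zr D_3_1 by blast
  have Zl_4_1: "\<And>k l. G 4 1 k l = 0"
    using Zl D_4_1 by blast
  have Zr_4_1: "\<And>k l. G k l 4 1 = 0"
    using Zr D_4_1 by blast
  have Zl_4_2: "\<And>k l. G 4 2 k l = 0"
    using Zl D_4_2 by blast
  have Zr_4_2: "\<And>k l. G k l 4 2 = 0"
    using Zr D_4_2 by blast
  have E1: "G 1 2 4 3 = 1"
    using X_1_4_2_3 R_1_2_3 R_4_2_3 C_1_4_2 C_1_4_3 D_1_2 D_1_3 D_4_2 D_4_3 Zl_4_2[of 4 2] Zl_4_2[of 4 3] Zr_4_2[of 1 2] Zr_4_2[of 1 3] by linarith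
  have eqc: "c p 1 2 = c p 4 3" if "p < r" for p
  proof -
    have "(\<Sum>p<r. (c p 1 2 - c p 4 3)^2) = G 1 2 1 2 + G 4 3 4 3 - 2 * G 1 2 4 3"
      by (simp add: G_def power2_eq_square algebra_simps sum.distrib sum_distrib_left sum_subtractf)
    also have "\<dots> = 0" using D_1_2 D_4_3 E1 by simp
    finally have "\<forall>p\<in>{..<r}. (c p 1 2 - c p 4 3)^2 = 0"
      by (subst sum_nonneg_eq_0_iff[symmetric]) auto
    thus ?thesis using that by simp
  qed
  have SubR: "G k l 1 2 = G k l 4 3" for k l unfolding G_def by (rule sum.cong[OF refl]) (metis eqc lessThan_iff)
  have SubL: "G 1 2 k l = G 4 3 k l" for k l unfolding G_def by (rule sum.cong[OF refl]) (metis eqc lessThan_iff)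
  have T_0_0_0_1: "G 0 0 0 1 = 0"
    using R_0_0_1 D_0_0 D_0_1 by linarith
  have T_0_0_0_1': "G 0 1 0 0 = 0"
    using T_0_0_0_1 Gsym[of 0 0 0 1] by simp
  have T_0_0_0_2: "G 0 0 0 2 = 0"
    using R_0_0_2 D_0_0 D_0_2 by linarith
  have T_0_0_0_2': "G 0 2 0 0 = 0"
    using T_0_0_0_2 Gsym[of 0 0 0 2] by simp
  have T_0_0_1_0: "G 0 0 1 0 = 0"
    using C_0_1_0 D_0_0 D_1_0 by linarith
  have T_0_0_1_0': "G 1 0 0 0 = 0"
    using T_0_0_1_0 Gsym[of 0 0 1 0] by simp
  have T_0_0_1_2: "G 0 0 1 2 = 0"
    using X_0_4_0_3 R_4_0_3 C_0_4_0 D_0_0 D_0_3 D_4_0 D_4_3 SubR[of 0 0] Zl_0_3[of 0 3] Zl_0_3[of 4 0] Zl_0_3[of 4 3] Zr_0_3[of 0 0] by linarith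
  have T_0_0_1_2': "G 1 2 0 0 = 0"
    using T_0_0_1_2 Gsym[of 0 0 1 2] by simp
  have T_0_0_1_3: "G 0 0 1 3 = 0"
    using X_0_1_0_3 R_0_0_3 R_1_0_3 C_0_1_0 C_0_1_3 D_0_0 D_0_3 D_1_0 D_1_3 Zl_0_3[of 0 3] Zl_0_3[of 1 0] Zl_0_3[of 1 3] Zr_0_3[of 0 0] by linarith
  have T_0_0_1_3': "G 1 3 0 0 = 0"
    using T_0_0_1_3 Gsym[of 0 0 1 3] by simp
  have T_0_0_2_1: "G 0 0 2 1 = 0"
    using X_0_2_0_1 R_0_0_1 R_2_0_1 C_0_2_0 C_0_2_1 D_0_0 D_0_1 D_2_0 D_2_1 Zl_2_0[of 2 0] Zl_2_0[of 2 1] Zr_2_0[of 0 0] Zr_2_0[of 0 1] by linarith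
  have T_0_0_2_1': "G 2 1 0 0 = 0"
    using T_0_0_2_1 Gsym[of 0 0 2 1] by simp
  have T_0_0_2_3: "G 0 0 2 3 = 0"
    using X_0_2_0_3 R_0_0_3 R_2_0_3 C_0_2_0 C_0_2_3 D_0_0 D_0_3 D_2_0 D_2_3 Zl_0_3[of 0 3] Zl_0_3[of 2 0] Zl_0_3[of 2 3] Zl_2_0[of 2 0] Zl_2_0[of 2 3] Zr_0_3[of 0 0] Zr_2_0[of 0 0] by linarith
  have T_0_0_2_3': "G 2 3 0 0 = 0"
    using T_0_0_2_3 Gsym[of 0 0 2 3] by simp
  have T_0_0_3_2: "G 0 0 3 2 = 0"
    using X_0_3_0_2 R_0_0_2 R_3_0_2 C_0_3_0 C_0_3_2 D_0_0 D_0_2 D_3_0 D_3_2 Zl_3_0[of 3 0] Zl_3_0[of 3 2] Zr_3_0[of 0 0] Zr_3_0[of 0 2] by linarith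
  have T_0_0_3_2': "G 3 2 0 0 = 0"
    using T_0_0_3_2 Gsym[of 0 0 3 2] by simp
  have T_0_0_3_3: "G 0 0 3 3 = 0"
    using X_0_3_0_3 R_0_0_3 R_3_0_3 C_0_3_0 C_0_3_3 D_0_0 D_0_3 D_3_0 D_3_3 Zl_0_3[of 0 3] Zl_0_3[of 3 0] Zl_0_3[of 3 3] Zl_3_0[of 3 0] Zl_3_0[of 3 3] Zr_0_3[of 0 0] Zr_3_0[of 0 0] by linarith
  have T_0_0_3_3': "G 3 3 0 0 = 0"
    using T_0_0_3_3 Gsym[of 0 0 3 3] by simp
  have T_0_0_4_0: "G 0 0 4 0 = 0"
    using C_0_4_0 D_0_0 D_4_0 by linarith
  have T_0_0_4_0': "G 4 0 0 0 = 0"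
    using T_0_0_4_0 Gsym[of 0 0 4 0] by simp
  have T_0_1_0_2: "G 0 1 0 2 = 0"
    using R_0_1_2 D_0_1 D_0_2 by linarith
  have T_0_1_0_2': "G 0 2 0 1 = 0"
    using T_0_1_0_2 Gsym[of 0 1 0 2] by simp
  have T_0_1_1_0: "G 0 1 1 0 = 0"
    using X_0_1_0_1 R_0_0_1 R_1_0_1 C_0_1_0 C_0_1_1 D_0_0 D_0_1 D_1_0 D_1_1 Zl_1_1[of 1 1] Zr_1_1[of 0 0] Zr_1_1[of 0 1] Zr_1_1[of 1 0] by linarith
  have T_0_1_1_0': "G 1 0 0 1 = 0"
    using T_0_1_1_0 Gsym[of 0 1 1 0] by simp
  have T_0_1_1_2: "G 0 1 1 2 = 0"
    using X_0_1_1_2 R_0_1_2 R_1_1_2 C_0_1_1 C_0_1_2 D_0_1 D_0_2 D_1_1 D_1_2 Zl_1_1[of 1 1] Zl_1_1[of 1 2] Zr_1_1[of 0 1] Zr_1_1[of 0 2] by linarith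
  have T_0_1_1_2': "G 1 2 0 1 = 0"
    using T_0_1_1_2 Gsym[of 0 1 1 2] by simp
  have T_0_1_1_3: "G 0 1 1 3 = 0"
    using X_0_1_1_3 R_0_1_3 R_1_1_3 C_0_1_1 C_0_1_3 D_0_1 D_0_3 D_1_1 D_1_3 Zl_0_3[of 0 3] Zl_0_3[of 1 1] Zl_0_3[of 1 3] Zl_1_1[of 1 1] Zl_1_1[of 1 3] Zr_0_3[of 0 1] Zr_1_1[of 0 1] by linarith
  have T_0_1_1_3': "G 1 3 0 1 = 0"
    using T_0_1_1_3 Gsym[of 0 1 1 3] by simp
  have T_0_1_2_1: "G 0 1 2 1 = 0"
    using C_0_2_1 D_0_1 D_2_1 by linarith
  have T_0_1_2_1': "G 2 1 0 1 = 0"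
    using T_0_1_2_1 Gsym[of 0 1 2 1] by simp
  have T_0_1_2_3: "G 0 1 2 3 = 0"
    using X_0_2_1_3 R_0_1_3 R_2_1_3 C_0_2_1 C_0_2_3 D_0_1 D_0_3 D_2_1 D_2_3 Zl_0_3[of 0 3] Zl_0_3[of 2 1] Zl_0_3[of 2 3] Zr_0_3[of 0 1] by linarith
  have T_0_1_2_3': "G 2 3 0 1 = 0"
    using T_0_1_2_3 Gsym[of 0 1 2 3] by simp
  have T_0_1_3_2: "G 0 1 3 2 = 0"
    using X_0_3_1_2 R_0_1_2 R_3_1_2 C_0_3_1 C_0_3_2 D_0_1 D_0_2 D_3_1 D_3_2 Zl_3_1[of 3 1] Zl_3_1[of 3 2] Zr_3_1[of 0 1] Zr_3_1[of 0 2] by linarith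
  have T_0_1_3_2': "G 3 2 0 1 = 0"
    using T_0_1_3_2 Gsym[of 0 1 3 2] by simp
  have T_0_1_3_3: "G 0 1 3 3 = 0"
    using X_0_3_1_3 R_0_1_3 R_3_1_3 C_0_3_1 C_0_3_3 D_0_1 D_0_3 D_3_1 D_3_3 Zl_0_3[of 0 3] Zl_0_3[of 3 1] Zl_0_3[of 3 3] Zl_3_1[of 3 1] Zl_3_1[of 3 3] Zr_0_3[of 0 1] Zr_3_1[of 0 1] by linarith
  have T_0_1_3_3': "G 3 3 0 1 = 0"
    using T_0_1_3_3 Gsym[of 0 1 3 3] by simp
  have T_0_1_4_0: "G 0 1 4 0 = 0"
    using X_0_4_0_1 R_0_0_1 R_4_0_1 C_0_4_0 C_0_4_1 D_0_0 D_0_1 D_4_0 D_4_1 Zl_4_1[of 4 1] Zr_4_1[of 0 0] Zr_4_1[of 0 1] Zr_4_1[of 4 0] by linarith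
  have T_0_1_4_0': "G 4 0 0 1 = 0"
    using T_0_1_4_0 Gsym[of 0 1 4 0] by simp
  have T_0_2_1_0: "G 0 2 1 0 = 0"
    using X_0_1_0_2 R_0_0_2 R_1_0_2 C_0_1_0 C_0_1_2 D_0_0 D_0_2 D_1_0 D_1_2 T_0_0_1_2 by linarith
  have T_0_2_1_0': "G 1 0 0 2 = 0"
    using T_0_2_1_0 Gsym[of 0 2 1 0] by simp
  have T_0_2_1_2: "G 0 2 1 2 = 0"
    using C_0_1_2 D_0_2 D_1_2 by linarith
  have T_0_2_1_2': "G 1 2 0 2 = 0"
    using T_0_2_1_2 Gsym[of 0 2 1 2] by simp
  have T_0_2_1_3: "G 0 2 1 3 = 0"
    using X_0_1_2_3 R_0_2_3 R_1_2_3 C_0_1_2 C_0_1_3 D_0_2 D_0_3 D_1_2 D_1_3 Zl_0_3[of 0 3] Zl_0_3[of 1 2] Zl_0_3[of 1 3] Zr_0_3[of 0 2] by linarith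
  have T_0_2_1_3': "G 1 3 0 2 = 0"
    using T_0_2_1_3 Gsym[of 0 2 1 3] by simp
  have T_0_2_2_1: "G 0 2 2 1 = 0"
    using X_0_2_1_2 R_0_1_2 R_2_1_2 C_0_2_1 C_0_2_2 D_0_1 D_0_2 D_2_1 D_2_2 Zl_2_2[of 2 2] Zr_2_2[of 0 1] Zr_2_2[of 0 2] Zr_2_2[of 2 1] by linarith
  have T_0_2_2_1': "G 2 1 0 2 = 0"
    using T_0_2_2_1 Gsym[of 0 2 2 1] by simp
  have T_0_2_2_3: "G 0 2 2 3 = 0"
    using X_0_2_2_3 R_0_2_3 R_2_2_3 C_0_2_2 C_0_2_3 D_0_2 D_0_3 D_2_2 D_2_3 Zl_0_3[of 0 3] Zl_0_3[of 2 2] Zl_0_3[of 2 3] Zl_2_2[of 2 2] Zl_2_2[of 2 3] Zr_0_3[of 0 2] Zr_2_2[of 0 2] by linarith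
  have T_0_2_2_3': "G 2 3 0 2 = 0"
    using T_0_2_2_3 Gsym[of 0 2 2 3] by simp
  have T_0_2_3_2: "G 0 2 3 2 = 0"
    using C_0_3_2 D_0_2 D_3_2 by linarith
  have T_0_2_3_2': "G 3 2 0 2 = 0"
    using T_0_2_3_2 Gsym[of 0 2 3 2] by simp
  have T_0_2_3_3: "G 0 2 3 3 = 0"
    using X_0_3_2_3 R_0_2_3 R_3_2_3 C_0_3_2 C_0_3_3 D_0_2 D_0_3 D_3_2 D_3_3 Zl_0_3[of 0 3] Zl_0_3[of 3 2] Zl_0_3[of 3 3] Zr_0_3[of 0 2] by linarith
  have T_0_2_3_3': "G 3 3 0 2 = 0"
    using T_0_2_3_3 Gsym[of 0 2 3 3] by simp
  have T_0_2_4_0: "G 0 2 4 0 = 0"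
    using X_0_4_0_2 R_0_0_2 R_4_0_2 C_0_4_0 C_0_4_2 D_0_0 D_0_2 D_4_0 D_4_2 Zl_4_2[of 4 2] Zr_4_2[of 0 0] Zr_4_2[of 0 2] Zr_4_2[of 4 0] by linarith
  have T_0_2_4_0': "G 4 0 0 2 = 0"
    using T_0_2_4_0 Gsym[of 0 2 4 0] by simp
  have T_1_0_1_2: "G 1 0 1 2 = 0"
    using R_1_0_2 D_1_0 D_1_2 by linarith
  have T_1_0_1_2': "G 1 2 1 0 = 0"
    using T_1_0_1_2 Gsym[of 1 0 1 2] by simp
  have T_1_0_1_3: "G 1 0 1 3 = 0"
    using R_1_0_3 D_1_0 D_1_3 by linarith
  have T_1_0_1_3': "G 1 3 1 0 = 0"
    using T_1_0_1_3 Gsym[of 1 0 1 3] by simp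
  have T_1_0_2_1: "G 1 0 2 1 = 0"
    using X_1_2_0_1 R_1_0_1 R_2_0_1 C_1_2_0 C_1_2_1 D_1_0 D_1_1 D_2_0 D_2_1 Zl_1_1[of 1 1] Zl_1_1[of 2 0] Zl_1_1[of 2 1] Zl_2_0[of 2 0] Zl_2_0[of 2 1] Zr_1_1[of 1 0] Zr_2_0[of 1 0] by linarith
  have T_1_0_2_1': "G 2 1 1 0 = 0"
    using T_1_0_2_1 Gsym[of 1 0 2 1] by simp
  have T_1_0_2_3: "G 1 0 2 3 = 0"
    using X_1_2_0_3 R_1_0_3 R_2_0_3 C_1_2_0 C_1_2_3 D_1_0 D_1_3 D_2_0 D_2_3 Zl_2_0[of 2 0] Zl_2_0[of 2 3] Zr_2_0[of 1 0] Zr_2_0[of 1 3] by linarith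
  have T_1_0_2_3': "G 2 3 1 0 = 0"
    using T_1_0_2_3 Gsym[of 1 0 2 3] by simp
  have T_1_0_3_2: "G 1 0 3 2 = 0"
    using X_1_3_0_2 R_1_0_2 R_3_0_2 C_1_3_0 C_1_3_2 D_1_0 D_1_2 D_3_0 D_3_2 Zl_3_0[of 3 0] Zl_3_0[of 3 2] Zr_3_0[of 1 0] Zr_3_0[of 1 2] by linarith
  have T_1_0_3_2': "G 3 2 1 0 = 0"
    using T_1_0_3_2 Gsym[of 1 0 3 2] by simp
  have T_1_0_3_3: "G 1 0 3 3 = 0"
    using X_1_3_0_3 R_1_0_3 R_3_0_3 C_1_3_0 C_1_3_3 D_1_0 D_1_3 D_3_0 D_3_3 Zl_3_0[of 3 0] Zl_3_0[of 3 3] Zr_3_0[of 1 0] Zr_3_0[of 1 3] by linarith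
  have T_1_0_3_3': "G 3 3 1 0 = 0"
    using T_1_0_3_3 Gsym[of 1 0 3 3] by simp
  have T_1_0_4_0: "G 1 0 4 0 = 0"
    using C_1_4_0 D_1_0 D_4_0 by linarith
  have T_1_0_4_0': "G 4 0 1 0 = 0"
    using T_1_0_4_0 Gsym[of 1 0 4 0] by simp
  have T_1_2_1_3: "G 1 2 1 3 = 0"
    using R_1_2_3 D_1_2 D_1_3 by linarith
  have T_1_2_1_3': "G 1 3 1 2 = 0"
    using T_1_2_1_3 Gsym[of 1 2 1 3] by simp
  have T_1_2_2_1: "G 1 2 2 1 = 0"
    using X_1_2_1_2 R_1_1_2 R_2_1_2 C_1_2_1 C_1_2_2 D_1_1 D_1_2 D_2_1 D_2_2 Zl_1_1[of 1 1] Zl_1_1[of 1 2] Zl_1_1[of 2 1] Zl_1_1[of 2 2] Zl_2_2[of 2 2] Zr_2_2[of 1 2] Zr_2_2[of 2 1] by linarith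
  have T_1_2_2_1': "G 2 1 1 2 = 0"
    using T_1_2_2_1 Gsym[of 1 2 2 1] by simp
  have T_1_2_2_3: "G 1 2 2 3 = 0"
    using X_1_2_2_3 R_1_2_3 R_2_2_3 C_1_2_2 C_1_2_3 D_1_2 D_1_3 D_2_2 D_2_3 Zl_2_2[of 2 2] Zl_2_2[of 2 3] Zr_2_2[of 1 2] Zr_2_2[of 1 3] by linarith
  have T_1_2_2_3': "G 2 3 1 2 = 0"
    using T_1_2_2_3 Gsym[of 1 2 2 3] by simp
  have T_1_2_3_2: "G 1 2 3 2 = 0"
    using C_1_3_2 D_1_2 D_3_2 by linarith
  have T_1_2_3_2': "G 3 2 1 2 = 0"
    using T_1_2_3_2 Gsym[of 1 2 3 2] by simp
  have T_1_2_3_3: "G 1 2 3 3 = 0"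
    using C_3_4_3 D_3_3 D_4_3 SubL[of 3 3] Gsym[of 4 3 3 3] by linarith
  have T_1_2_3_3': "G 3 3 1 2 = 0"
    using T_1_2_3_3 Gsym[of 1 2 3 3] by simp
  have T_1_2_4_0: "G 1 2 4 0 = 0"
    using X_1_4_0_2 R_1_0_2 R_4_0_2 C_1_4_0 C_1_4_2 D_1_0 D_1_2 D_4_0 D_4_2 Zl_4_2[of 4 2] Zr_4_2[of 1 0] Zr_4_2[of 1 2] Zr_4_2[of 4 0] by linarith
  have T_1_2_4_0': "G 4 0 1 2 = 0"
    using T_1_2_4_0 Gsym[of 1 2 4 0] by simp
  have T_1_3_2_1: "G 1 3 2 1 = 0"
    using X_1_2_1_3 R_1_1_3 R_2_1_3 C_1_2_1 C_1_2_3 D_1_1 D_1_3 D_2_1 D_2_3 Zl_1_1[of 1 1] Zl_1_1[of 1 3] Zl_1_1[of 2 1] Zl_1_1[of 2 3] by linarith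
  have T_1_3_2_1': "G 2 1 1 3 = 0"
    using T_1_3_2_1 Gsym[of 1 3 2 1] by simp
  have T_1_3_2_3: "G 1 3 2 3 = 0"
    using C_1_2_3 D_1_3 D_2_3 by linarith
  have T_1_3_2_3': "G 2 3 1 3 = 0"
    using T_1_3_2_3 Gsym[of 1 3 2 3] by simp
  have T_1_3_3_2: "G 1 3 3 2 = 0"
    using X_1_3_2_3 R_1_2_3 R_3_2_3 C_1_3_2 C_1_3_3 D_1_2 D_1_3 D_3_2 D_3_3 T_1_2_3_3 by linarith
  have T_1_3_3_2': "G 3 2 1 3 = 0"
    using T_1_3_3_2 Gsym[of 1 3 3 2] by simp
  have T_1_3_3_3: "G 1 3 3 3 = 0"
    using C_1_3_3 D_1_3 D_3_3 by linarith
  have T_1_3_3_3': "G 3 3 1 3 = 0"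
    using T_1_3_3_3 Gsym[of 1 3 3 3] by simp
  have T_1_3_4_0: "G 1 3 4 0 = 0"
    using X_1_4_0_3 R_1_0_3 R_4_0_3 C_1_4_0 C_1_4_3 D_1_0 D_1_3 D_4_0 D_4_3 SubR[of 1 0] R_1_0_2 D_1_2 by linarith
  have T_1_3_4_0': "G 4 0 1 3 = 0"
    using T_1_3_4_0 Gsym[of 1 3 4 0] by simp
  have T_2_1_2_3: "G 2 1 2 3 = 0"
    using R_2_1_3 D_2_1 D_2_3 by linarith
  have T_2_1_2_3': "G 2 3 2 1 = 0"
    using T_2_1_2_3 Gsym[of 2 1 2 3] by simp
  have T_2_1_3_2: "G 2 1 3 2 = 0"
    using X_2_3_1_2 R_2_1_2 R_3_1_2 C_2_3_1 C_2_3_2 D_2_1 D_2_2 D_3_1 D_3_2 Zl_2_2[of 2 2] Zl_2_2[of 3 1] Zl_2_2[of 3 2] Zl_3_1[of 3 1] Zl_3_1[of 3 2] Zr_2_2[of 2 1] Zr_3_1[of 2 1] by linarith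
  have T_2_1_3_2': "G 3 2 2 1 = 0"
    using T_2_1_3_2 Gsym[of 2 1 3 2] by simp
  have T_2_1_3_3: "G 2 1 3 3 = 0"
    using X_2_3_1_3 R_2_1_3 R_3_1_3 C_2_3_1 C_2_3_3 D_2_1 D_2_3 D_3_1 D_3_3 Zl_3_1[of 3 1] Zl_3_1[of 3 3] Zr_3_1[of 2 1] Zr_3_1[of 2 3] by linarith
  have T_2_1_3_3': "G 3 3 2 1 = 0"
    using T_2_1_3_3 Gsym[of 2 1 3 3] by simp
  have T_2_1_4_0: "G 2 1 4 0 = 0"
    using X_2_4_0_1 R_2_0_1 R_4_0_1 C_2_4_0 C_2_4_1 D_2_0 D_2_1 D_4_0 D_4_1 Zl_2_0[of 2 0] Zl_2_0[of 2 1] Zl_2_0[of 4 0] Zl_2_0[of 4 1] Zl_4_1[of 4 1] Zr_4_1[of 2 1] Zr_4_1[of 4 0] by linarith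
  have T_2_1_4_0': "G 4 0 2 1 = 0"
    using T_2_1_4_0 Gsym[of 2 1 4 0] by simp
  have T_2_3_3_2: "G 2 3 3 2 = 0"
    using X_2_3_2_3 R_2_2_3 R_3_2_3 C_2_3_2 C_2_3_3 D_2_2 D_2_3 D_3_2 D_3_3 Zl_2_2[of 2 2] Zl_2_2[of 2 3] Zl_2_2[of 3 2] Zl_2_2[of 3 3] by linarith
  have T_2_3_3_2': "G 3 2 2 3 = 0"
    using T_2_3_3_2 Gsym[of 2 3 3 2] by simp
  have T_2_3_3_3: "G 2 3 3 3 = 0"
    using C_2_3_3 D_2_3 D_3_3 by linarith
  have T_2_3_3_3': "G 3 3 2 3 = 0"
    using T_2_3_3_3 Gsym[of 2 3 3 3] by simp
  have T_2_3_4_0: "G 2 3 4 0 = 0"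
    using X_2_4_0_3 R_2_0_3 R_4_0_3 C_2_4_0 C_2_4_3 D_2_0 D_2_3 D_4_0 D_4_3 Zl_2_0[of 2 0] Zl_2_0[of 2 3] Zl_2_0[of 4 0] Zl_2_0[of 4 3] by linarith
  have T_2_3_4_0': "G 4 0 2 3 = 0"
    using T_2_3_4_0 Gsym[of 2 3 4 0] by simp
  have T_3_2_3_3: "G 3 2 3 3 = 0"
    using R_3_2_3 D_3_2 D_3_3 by linarith
  have T_3_2_3_3': "G 3 3 3 2 = 0"
    using T_3_2_3_3 Gsym[of 3 2 3 3] by simp
  have T_3_2_4_0: "G 3 2 4 0 = 0"
    using X_3_4_0_2 R_3_0_2 R_4_0_2 C_3_4_0 C_3_4_2 D_3_0 D_3_2 D_4_0 D_4_2 Zl_3_0[of 3 0] Zl_3_0[of 3 2] Zl_3_0[of 4 0] Zl_3_0[of 4 2] Zl_4_2[of 4 2] Zr_4_2[of 3 2] Zr_4_2[of 4 0] by linarith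
  have T_3_2_4_0': "G 4 0 3 2 = 0"
    using T_3_2_4_0 Gsym[of 3 2 4 0] by simp
  have T_3_3_4_0: "G 3 3 4 0 = 0"
    using X_3_4_0_3 R_3_0_3 R_4_0_3 C_3_4_0 C_3_4_3 D_3_0 D_3_3 D_4_0 D_4_3 Zl_3_0[of 3 0] Zl_3_0[of 3 3] Zl_3_0[of 4 0] Zl_3_0[of 4 3] by linarith
  have T_3_3_4_0': "G 4 0 3 3 = 0"
    using T_3_3_4_0 Gsym[of 3 3 4 0] by simp
  define w where "w s p = c p (rw s) (cl s)" for s p
  have "(\<Sum>p<r. w s p * w t p) = (if s = t then 1 else 0)" if "s < 11" "t < 11" for s t
  proof -
    have "(\<Sum>p<r. w s p * w t p) = G (rw s) (cl s) (rw t) (cl t)" by (simp add: w_def G_def)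
    moreover have "s \<in> {0,1,2,3,4,5,6,7,8,9,10}" "t \<in> {0,1,2,3,4,5,6,7,8,9,10}" using that by (simp_all add: eval_nat_numeral less_Suc_eq)
    ultimately show ?thesis
      by (elim insertE emptyE) (simp_all del: One_nat_def add: rwcl D_0_0 D_0_1 D_0_2 D_0_3 D_1_0 D_1_1 D_1_2 D_1_3 D_2_0 D_2_1 D_2_2 D_2_3 D_3_0 D_3_1 D_3_2 D_3_3 D_4_0 D_4_1 D_4_2 D_4_3 T_0_0_0_1 T_0_0_0_1' T_0_0_0_2 T_0_0_0_2' T_0_0_1_0 T_0_0_1_0' T_0_0_1_2 T_0_0_1_2' T_0_0_1_3 T_0_0_1_3' T_0_0_2_1 T_0_0_2_1' T_0_0_2_3 T_0_0_2_3' T_0_0_3_2 T_0_0_3_2' T_0_0_3_3 T_0_0_3_3' T_0_0_4_0 T_0_0_4_0' T_0_1_0_2 T_0_1_0_2' T_0_1_1_0 T_0_1_1_0' T_0_1_1_2 T_0_1_1_2' T_0_1_1_3 T_0_1_1_3' T_0_1_2_1 T_0_1_2_1' T_0_1_2_3 T_0_1_2_3' T_0_1_3_2 T_0_1_3_2' T_0_1_3_3 T_0_1_3_3' T_0_1_4_0 T_0_1_4_0' T_0_2_1_0 T_0_2_1_0' T_0_2_1_2 T_0_2_1_2' T_0_2_1_3 T_0_2_1_3' T_0_2_2_1 T_0_2_2_1' T_0_2_2_3 T_0_2_2_3' T_0_2_3_2 T_0_2_3_2' T_0_2_3_3 T_0_2_3_3' T_0_2_4_0 T_0_2_4_0' T_1_0_1_2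 T_1_0_1_2' T_1_0_1_3 T_1_0_1_3' T_1_0_2_1 T_1_0_2_1' T_1_0_2_3 T_1_0_2_3' T_1_0_3_2 T_1_0_3_2' T_1_0_3_3 T_1_0_3_3' T_1_0_4_0 T_1_0_4_0' T_1_2_1_3 T_1_2_1_3' T_1_2_2_1 T_1_2_2_1' T_1_2_2_3 T_1_2_2_3' T_1_2_3_2 T_1_2_3_2' T_1_2_3_3 T_1_2_3_3' T_1_2_4_0 T_1_2_4_0' T_1_3_2_1 T_1_3_2_1' T_1_3_2_3 T_1_3_2_3' T_1_3_3_2 T_1_3_3_2' T_1_3_3_3 T_1_3_3_3' T_1_3_4_0 T_1_3_4_0' T_2_1_2_3 T_2_1_2_3' T_2_1_3_2 T_2_1_3_2' T_2_1_3_3 T_2_1_3_3' T_2_1_4_0 T_2_1_4_0' T_2_3_3_2 T_2_3_3_2' T_2_3_3_3 T_2_3_3_3' T_2_3_4_0 T_2_3_4_0' T_3_2_3_3 T_3_2_3_3' T_3_2_4_0 T_3_2_4_0' T_3_3_4_0 T_3_3_4_0')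
  qed
  thus ?thesis by (rule orth_bound)
qed



lemma sum4: "(\<Sum>p<(4::nat). f p) = f 0 + f 1 + f 2 + f 3"
proof -
  have "{..<(4::nat)} = {0,1,2,3}" by auto
  then show ?thesis by (simp add: add.assoc)
qed

lemma sum5: "(\<Sum>p<(5::nat). f p) = f 0 + f 1 + f 2 + f 3 + f 4"
proof -
  have "{..<(5::nat)} = {0,1,2,3,4}" by auto
  then show ?thesis by (simp add: add.assoc)
qed

lemma sum11: "(\<Sum>p<(11::nat). f p) = f 0 + f 1 + f 2 + f 3 + f 4 + f 5 + f 6 + f 7 + f 8 + f 9 + f 10"
proof -
  have "{..<(11::nat)} = {0,1,2,3,4,5,6,7,8,9,10}" by (auto simp: less_Suc_eq eval_nat_numeral)
  then show ?thesis by (simp add: add.assoc)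
qed

definition ind :: "nat \<Rightarrow> nat \<Rightarrow> nat \<Rightarrow> nat \<Rightarrow> real" where
  "ind a b = (\<lambda>i j. if i = a \<and> j = b then 1 else 0)"

lemma bf_ind: assumes "a < m" "b < n" shows "bilinear_form m n (ind a b) x y = x a * y b"
proof -
  have "\<And>i j. ind a b i j * x i * y j = (if j = b then (if i = a then x a * y b else 0) else 0)"
    by (simp add: ind_def)
  then show ?thesis using assms by (simp add: bilinear_form_def)
qed

lemma bf_plusc: "bilinear_form m n (\<lambda>i j. C i j + D i j) x y = bilinear_form m n C x y + bilinear_form m n D x y"
  by (simp add: bilinear_form_def algebra_simps sum.distrib)

definition cc :: "nat \<Rightarrow> nat \<Rightarrow> nat \<Rightarrow> real" where
  "cc p = (if p = 0 then ind 0 0 else if p = 1 then ind 0 1 else if p = 2 then ind 0 2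
    else if p = 3 then ind 1 0 else if p = 4 then ind 1 3 else if p = 5 then ind 2 1
    else if p = 6 then ind 2 3 else if p = 7 then ind 3 2 else if p = 8 then ind 3 3
    else if p = 9 then ind 4 0 else (\<lambda>i j. ind 1 2 i j + ind 4 3 i j))"

lemma upper: "sos_with 5 4 PP 11"
  unfolding sos_with_def
proof (intro exI allI)
  fix x y :: "nat \<Rightarrow> real"
  show "PP x y = (\<Sum>p<11. (bilinear_form 5 4 (cc p) x y)\<^sup>2)"
    by (simp add: sum4 sum5 sum11 cc_def bf_ind bf_plusc PP_def power_mult_distrib)
qed

definition aa :: "nat \<Rightarrow> nat \<Rightarrow> nat \<Rightarrow> nat \<Rightarrow> real" where
  "aa i j k l = (if i = k \<and> j = l \<and> (i, j) \<in> {(0,0),(0,1),(0,2),(1,0),(1,3),(2,1),(2,3),(3,2),(3,3),(4,0),(1,2),(4,3)} then 1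
     else if i = 1 \<and> j = 2 \<and> k = 4 \<and> l = 3 then 2 else 0)"

lemma biq: "is_biquadratic 5 4 PP"
  unfolding is_biquadratic_def
proof (intro exI ext)
  fix x y :: "nat \<Rightarrow> real"
  show "PP x y = (\<Sum>i<5. \<Sum>k<5. \<Sum>j<4. \<Sum>l<4. aa i j k l * x i * x k * y j * y l)"
    by (simp add: sum4 sum5 sum11 aa_def PP_def power2_eq_square) (simp add: algebra_simps)
qed
theorem corollary5p2:
  fixes P :: "(nat \<Rightarrow> real) \<Rightarrow> (nat \<Rightarrow> real) \<Rightarrow> real"
  defines "P \<equiv> (\<lambda>x y.
      (x 0)\<^sup>2 * (y 0)\<^sup>2 + (x 0)\<^sup>2 * (y 1)\<^sup>2 + (x 0)\<^sup>2 * (y 2)\<^sup>2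
    + (x 1)\<^sup>2 * (y 0)\<^sup>2 + (x 1)\<^sup>2 * (y 3)\<^sup>2
    + (x 2)\<^sup>2 * (y 1)\<^sup>2 + (x 2)\<^sup>2 * (y 3)\<^sup>2
    + (x 3)\<^sup>2 * (y 2)\<^sup>2 + (x 3)\<^sup>2 * (y 3)\<^sup>2
    + (x 4)\<^sup>2 * (y 0)\<^sup>2
    + (x 1 * y 2 + x 4 * y 3)\<^sup>2)"
  shows "is_biquadratic 5 4 P \<and> is_sos 5 4 P \<and> sos_rank 5 4 P = 11 \<and> BSR 5 4 \<ge> 11"
proof -
  have PPeq: "P = PP" unfolding P_def PP_def by (rule refl)
  have up: "sos_with 5 4 P 11" using upper PPeq by simp
  have low: "11 \<le> r" if h: "sos_with 5 4 P r" for r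
  proof -
    obtain c where "\<forall>x y. PP x y = (\<Sum>p<r. (bilinear_form 5 4 (c p) x y)\<^sup>2)"
      using h unfolding PPeq sos_with_def by blast
    then show ?thesis by (intro lower[of c r]) blast
  qed
  have rank: "sos_rank 5 4 P = 11" unfolding sos_rank_def
    by (rule Least_equality) (use up low in auto)
  have biq': "is_biquadratic 5 4 P" using biq PPeq by simp
  have sos: "is_sos 5 4 P" unfolding is_sos_def using up by blast
  have "enat (sos_rank 5 4 P) \<le> BSR 5 4" unfolding BSR_def
    by (rule SUP_upper) (simp add: biq' sos)
  hence "11 \<le> BSR 5 4" using rank by (simp add: numeral_eq_enat)
  then show ?thesis using biq' sos rank by simp
qed

end
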